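(* Every countably infinite line graph $G$ admits a majority $2$-vertex-coloring, i.e. there is a partition $V(G)=V_1\cup V_2$ such that for each $i\in\{1,2\}$ and each $v\in V_i$, $|N(v)\cap V_i|\le |N(v)\setminus V_i|$ (as cardinalities).
   Context: $N(v)$ denotes the set of neighbors of $v$ in $G$. A line graph is the line graph $L(H)$ of some graph $H$: its vertices are the edges of $H$, two being adjacent iff they share an endvertex. *)

theory Defs
  imports Main "HOL-Library.Equipollence"
begin

definition simple_graph :: "'a set \<Rightarrow> ('a \<Rightarrow> 'a \<Rightarrow> bool) \<Rightarrow> bool" where
  "simple_graph V E \<longleftrightarrow> (\<forall>u v. E u v \<longrightarrow> u \<in> V \<and> v \<in> V \<and> u \<noteq> v \<and> E v u)"

definition nbhd :: "('a \<Rightarrow> 'a \<Rightarrow> bool) \<Rightarrow> 'a \<Rightarrow> 'a set" where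
  "nbhd E v = {u. E v u}"

definition edge_set :: "('h \<Rightarrow> 'h \<Rightarrow> bool) \<Rightarrow> 'h set set" where
  "edge_set F = {{x, y} | x y. F x y}"

definition is_line_graph_of ::
  "'a set \<Rightarrow> ('a \<Rightarrow> 'a \<Rightarrow> bool) \<Rightarrow> 'h set \<Rightarrow> ('h \<Rightarrow> 'h \<Rightarrow> bool) \<Rightarrow> bool" where
  "is_line_graph_of V E W F \<longleftrightarrow> simple_graph W F \<and>
     (\<exists>\<phi>. bij_betw \<phi> V (edge_set F) \<and>
        (\<forall>u\<in>V. \<forall>v\<in>V. E u v \<longleftrightarrow> u \<noteq> v \<and> \<phi> u \<inter> \<phi> v \<noteq> {}))"

definition majority_2_colouring :: "'a set \<Rightarrow> ('a \<Rightarrow> 'a \<Rightarrow> bool) \<Rightarrow> 'a set \<Rightarrow> 'a set \<Rightarrow> bool" where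
  "majority_2_colouring V E V1 V2 \<longleftrightarrow> V1 \<union> V2 = V \<and> V1 \<inter> V2 = {} \<and>
     (\<forall>Vi \<in> {V1, V2}. \<forall>v \<in> Vi. nbhd E v \<inter> Vi \<lesssim> nbhd E v - Vi)"

end

theory Submission
  imports Defs "HOL-Library.Countable_Set"
begin

definition good :: "('a \<Rightarrow> 'a \<Rightarrow> bool) \<Rightarrow> ('a \<Rightarrow> bool) \<Rightarrow> 'a \<Rightarrow> bool" where
  "good E c v \<longleftrightarrow> card {w \<in> nbhd E v. c w = c v} \<le> card {w \<in> nbhd E v. c w \<noteq> c v}"

definition Xs :: "('a \<Rightarrow> 'a \<Rightarrow> bool) \<Rightarrow> 'a set \<Rightarrow> ('a \<Rightarrow> bool) \<Rightarrow> ('a \<times> 'a) set" where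
  "Xs E D c = {(u,w). E u w \<and> (u \<in> D \<or> w \<in> D) \<and> c u = c w}"

lemma Xs_finite:
  assumes sym: "\<And>u w. E u w \<Longrightarrow> E w u" and "finite D" and fin: "\<forall>u\<in>D. finite (nbhd E u)"
  shows "finite (Xs E D c)"
proof -
  have "Xs E D c \<subseteq> Sigma D (nbhd E) \<union> (\<lambda>(a,b). (b,a)) ` Sigma D (nbhd E)"
  proof
    fix p assume "p \<in> Xs E D c"
    then obtain a b where p: "p = (a,b)" "E a b" "a \<in> D \<or> b \<in> D" by (auto simp: Xs_def)
    then show "p \<in> Sigma D (nbhd E) \<union> (\<lambda>(a,b). (b,a)) ` Sigma D (nbhd E)"
      using sym[of a b] by (auto simp: nbhd_def image_iff)
  qed
  moreover have "finite (Sigma D (nbhd E))" using assms by auto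
  ultimately show ?thesis by (meson finite_Un finite_imageI finite_subset)
qed

lemma Xs_decomp:
  assumes sym: "\<And>u w. E u w \<Longrightarrow> E w u" and irr: "\<And>u. \<not> E u u"
    and "finite D" and fin: "\<forall>u\<in>D. finite (nbhd E u)" and v: "v \<in> D"
  shows "card (Xs E D c) = card {p \<in> Xs E D c. fst p \<noteq> v \<and> snd p \<noteq> v}
            + 2 * card {w \<in> nbhd E v. c w = c v}"
proof -
  let ?S = "{w \<in> nbhd E v. c w = c v}"
  let ?Y = "{p \<in> Xs E D c. fst p \<noteq> v \<and> snd p \<noteq> v}"
  have eq: "Xs E D c = ?Y \<union> ((\<lambda>w. (v,w)) ` ?S \<union> (\<lambda>w. (w,v)) ` ?S)"
  proof (rule set_eqI)
    fix p :: "'a \<times> 'a"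
    obtain a b where p: "p = (a,b)" by fastforce
    show "p \<in> Xs E D c \<longleftrightarrow> p \<in> ?Y \<union> ((\<lambda>w. (v,w)) ` ?S \<union> (\<lambda>w. (w,v)) ` ?S)"
      unfolding p using v sym[of a v] sym[of v b] sym[of v a] by (auto simp: Xs_def nbhd_def)
  qed
  have fS: "finite ?S" using fin v by auto
  have fY: "finite ?Y" using Xs_finite[OF sym assms(3,4)] by auto
  have d1: "?Y \<inter> ((\<lambda>w. (v,w)) ` ?S \<union> (\<lambda>w. (w,v)) ` ?S) = {}" by auto
  have d2: "(\<lambda>w. (v,w)) ` ?S \<inter> (\<lambda>w. (w,v)) ` ?S = {}" using irr by (auto simp: nbhd_def)
  have c1: "card ((\<lambda>w. (v,w)) ` ?S) = card ?S" by (rule card_image) (auto simp: inj_on_def)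
  have c2: "card ((\<lambda>w. (w,v)) ` ?S) = card ?S" by (rule card_image) (auto simp: inj_on_def)
  have "card (Xs E D c) = card (?Y \<union> ((\<lambda>w. (v,w)) ` ?S \<union> (\<lambda>w. (w,v)) ` ?S))"
    by (rule arg_cong[OF eq])
  also have "\<dots> = card ?Y + card ((\<lambda>w. (v,w)) ` ?S \<union> (\<lambda>w. (w,v)) ` ?S)"
    by (rule card_Un_disjoint) (use fS fY d1 in auto)
  also have "card ((\<lambda>w. (v,w)) ` ?S \<union> (\<lambda>w. (w,v)) ` ?S) = 2 * card ?S"
    by (subst card_Un_disjoint) (use fS d2 c1 c2 in auto)
  finally show ?thesis .
qed

lemma finite_step:
  assumes sym: "\<And>u w. E u w \<Longrightarrow> E w u" and irr: "\<And>u. \<not> E u u"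
    and fD: "finite D" and fin: "\<forall>u\<in>D. finite (nbhd E u)"
  shows "\<exists>c. (\<forall>u. u \<notin> D \<longrightarrow> c u = c0 u) \<and> (\<forall>v\<in>D. good E c v)"
proof -
  obtain c where P: "\<forall>u. u \<notin> D \<longrightarrow> c u = c0 u"
    and min: "\<And>c'. \<forall>u. u \<notin> D \<longrightarrow> c' u = c0 u \<Longrightarrow> card (Xs E D c) \<le> card (Xs E D c')"
    using ex_has_least_nat[of "\<lambda>c. \<forall>u. u \<notin> D \<longrightarrow> c u = c0 u" c0 "\<lambda>c. card (Xs E D c)"] by auto
  have "good E c v" if v: "v \<in> D" for v
  proof (rule ccontr)
    assume ng: "\<not> good E c v"
    define c' where "c' = c(v := \<not> c v)"
    have P': "\<forall>u. u \<notin> D \<longrightarrow> c' u = c0 u" using P v by (auto simp: c'_def)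
    have Y: "{p \<in> Xs E D c'. fst p \<noteq> v \<and> snd p \<noteq> v} = {p \<in> Xs E D c. fst p \<noteq> v \<and> snd p \<noteq> v}"
      by (auto simp: Xs_def c'_def)
    have S: "{w \<in> nbhd E v. c' w = c' v} = {w \<in> nbhd E v. c w \<noteq> c v}"
      using irr by (auto simp: c'_def nbhd_def)
    have "card (Xs E D c') < card (Xs E D c)"
      using Xs_decomp[OF sym irr fD fin v, of c] Xs_decomp[OF sym irr fD fin v, of c'] Y S ng
      by (simp add: good_def)
    with min[OF P'] show False by simp
  qed
  with P show ?thesis by blast
qed

lemma good_cong:
  assumes "\<And>w. w \<in> insert v (nbhd E v) \<Longrightarrow> c' w = c w" and "good E c' v"
  shows "good E c v"
proof -
  have "{w \<in> nbhd E v. c' w = c' v} = {w \<in> nbhd E v. c w = c v}"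
       "{w \<in> nbhd E v. c' w \<noteq> c' v} = {w \<in> nbhd E v. c w \<noteq> c v}"
    using assms(1) by auto
  then show ?thesis using assms(2) by (simp add: good_def)
qed

lemma koenig_step:
  assumes sym: "\<And>u w. E u w \<Longrightarrow> E w u" and irr: "\<And>u. \<not> E u u"
    and cA: "countable A" and fin: "\<forall>u\<in>A. finite (nbhd E u)"
  shows "\<exists>c. (\<forall>u. u \<notin> A \<longrightarrow> c u = c0 u) \<and> (\<forall>v\<in>A. good E c v)"
proof (cases "A = {}")
  case True
  then show ?thesis by auto
next
  case ne: False
  define a where "a = from_nat_into A"
  have aA: "a i \<in> A" for i using ne by (simp add: a_def from_nat_into)
  define Dn where "Dn n = a ` {..<n}" for n
  have DnA: "Dn n \<subseteq> A" for n using aA by (auto simp: Dn_def)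
  define Q where "Q k p \<longleftrightarrow> (\<forall>n. \<exists>c. (\<forall>u. u \<notin> A \<longrightarrow> c u = c0 u) \<and> (\<forall>v\<in>Dn n. good E c v)
       \<and> (\<forall>i<k. c (a i) = p i))" for k p
  have Q0: "Q 0 p" for p
    unfolding Q_def
  proof
    fix n
    have f1: "finite (Dn n)" by (simp add: Dn_def)
    have f2: "\<forall>u\<in>Dn n. finite (nbhd E u)" using fin DnA by blast
    have "\<exists>c. (\<forall>u. u \<notin> Dn n \<longrightarrow> c u = c0 u) \<and> (\<forall>v\<in>Dn n. good E c v)"
      apply (rule finite_step[of E "Dn n" c0])
      using sym irr f1 f2 by auto
    then obtain c where c1: "\<forall>u. u \<notin> Dn n \<longrightarrow> c u = c0 u" and c2: "\<forall>v\<in>Dn n. good E c v"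
      by (elim exE conjE)
    have c1': "\<forall>u. u \<notin> A \<longrightarrow> c u = c0 u" using c1 DnA by blast
    show "\<exists>c. (\<forall>u. u \<notin> A \<longrightarrow> c u = c0 u) \<and> (\<forall>v\<in>Dn n. good E c v) \<and> (\<forall>i<0. c (a i) = p i)"
      using c1' c2 by blast
  qed
  have mono: "Dn n \<subseteq> Dn m" if "n \<le> m" for n m using that by (auto simp: Dn_def)
  have step: "Q (Suc k) (p(k:=True)) \<or> Q (Suc k) (p(k:=False))" if q: "Q k p" for k p
  proof (rule ccontr)
    assume "\<not> ?thesis"
    then have nq1: "\<not> Q (Suc k) (p(k:=True))" and nq2: "\<not> Q (Suc k) (p(k:=False))" by auto
    from nq1 obtain n1 where
      n1: "\<And>c. (\<forall>u. u \<notin> A \<longrightarrow> c u = c0 u) \<Longrightarrow> (\<forall>v\<in>Dn n1. good E c v) \<Longrightarrow> \<not> (\<forall>i<Suc k. c (a i) = (p(k:=True)) i)"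
      unfolding Q_def by (metis (no_types, lifting))
    from nq2 obtain n2 where
      n2: "\<And>c. (\<forall>u. u \<notin> A \<longrightarrow> c u = c0 u) \<Longrightarrow> (\<forall>v\<in>Dn n2. good E c v) \<Longrightarrow> \<not> (\<forall>i<Suc k. c (a i) = (p(k:=False)) i)"
      unfolding Q_def by (metis (no_types, lifting))
    from q obtain c where c1: "\<forall>u. u \<notin> A \<longrightarrow> c u = c0 u" and c2: "\<forall>v\<in>Dn (max n1 n2). good E c v"
      and c3: "\<forall>i<k. c (a i) = p i" unfolding Q_def by blast
    have g1: "\<forall>v\<in>Dn n1. good E c v" using c2 mono[of n1 "max n1 n2"] by auto
    have g2: "\<forall>v\<in>Dn n2. good E c v" using c2 mono[of n2 "max n1 n2"] by auto
    show False
    proof (cases "c (a k)")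
      case True
      then have "\<forall>i<Suc k. c (a i) = (p(k:=True)) i" using c3 by (auto simp: less_Suc_eq)
      then show False using n1[OF c1 g1] by blast
    next
      case False
      then have "\<forall>i<Suc k. c (a i) = (p(k:=False)) i" using c3 by (auto simp: less_Suc_eq)
      then show False using n2[OF c1 g2] by blast
    qed
  qed
  define P where "P = rec_nat (\<lambda>_. False) (\<lambda>k pk. pk(k := Q (Suc k) (pk(k:=True))))"
  have P0: "P 0 = (\<lambda>_. False)" by (simp add: P_def)
  have PS: "P (Suc k) = (P k)(k := Q (Suc k) ((P k)(k:=True)))" for k by (simp add: P_def)
  have QP: "Q k (P k)" for k
  proof (induction k)
    case 0 show ?case using Q0 by simp
  next
    case (Suc k)
    show ?case
    proof (cases "Q (Suc k) ((P k)(k:=True))")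
      case True then show ?thesis by (simp only: PS)
    next
      case False
      then have e: "P (Suc k) = (P k)(k := False)" using PS[of k] by metis
      show ?thesis unfolding e using step[OF Suc] False by blast
    qed
  qed
  have Pst: "i < k \<Longrightarrow> P k i = P (Suc i) i" for i k
  proof (induction k)
    case 0 then show ?case by simp
  next
    case (Suc k)
    then show ?case by (cases "i = k") (auto simp: PS)
  qed
  define c where "c v = (if v \<in> A then P (Suc (to_nat_on A v)) (to_nat_on A v) else c0 v)" for v
  have "good E c v" if vA: "v \<in> A" for v
  proof -
    let ?T = "insert v (nbhd E v) \<inter> A"
    have fT: "finite ?T" using fin vA by auto
    define K where "K = Suc (Max (to_nat_on A ` ?T))"
    have lt: "to_nat_on A w < K" if "w \<in> ?T" for w
      using fT that by (simp add: K_def le_imp_less_Suc)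
    obtain c' where c1: "\<forall>u. u \<notin> A \<longrightarrow> c' u = c0 u" and c2: "\<forall>v\<in>Dn K. good E c' v"
      and c3: "\<forall>i<K. c' (a i) = P K i" using QP[of K] unfolding Q_def by blast
    have "v \<in> Dn K" using lt[of v] vA cA unfolding Dn_def a_def
      by (auto intro!: image_eqI[where x="to_nat_on A v"])
    then have gv: "good E c' v" using c2 by blast
    have eq: "c' w = c w" if "w \<in> insert v (nbhd E v)" for w
    proof (cases "w \<in> A")
      case True
      then have "c' w = c' (a (to_nat_on A w))" using cA by (simp add: a_def)
      also have "\<dots> = P K (to_nat_on A w)" using c3 lt[of w] True that by auto
      also have "\<dots> = c w" using Pst[of "to_nat_on A w" K] lt[of w] True that by (simp add: c_def)
      finally show ?thesis .
    next
      case False then show ?thesis using c1 by (simp add: c_def)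
    qed
    show ?thesis by (rule good_cong[OF eq gv])
  qed
  moreover have "\<forall>u. u \<notin> A \<longrightarrow> c u = c0 u" by (simp add: c_def)
  ultimately show ?thesis by blast
qed


lemma inf_image_nat:
  assumes "inj (g :: nat \<Rightarrow> nat)" "range g \<subseteq> S"
  shows "infinite S"
proof
  assume "finite S"
  then have "finite (range g)" using assms(2) finite_subset by blast
  then show False using assms(1) finite_imageD by fastforce
qed

lemma split_inf:
  assumes "infinite T"
  shows "\<exists>R\<subseteq>T. infinite R \<and> infinite (T - R)"
proof -
  obtain f :: "nat \<Rightarrow> _" where f: "inj f" "range f \<subseteq> T"
    using infinite_countable_subset[OF assms] by blast
  let ?R = "f ` {n. even n}"
  have i1: "infinite {n::nat. even n}"
    by (rule inf_image_nat[of "\<lambda>n. 2*n"]) (auto simp: inj_def)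
  have i2: "infinite {n::nat. odd n}"
    by (rule inf_image_nat[of "\<lambda>n. 2*n+1"]) (auto simp: inj_def)
  have R1: "infinite ?R" using i1 f(1) finite_imageD inj_on_subset subset_UNIV by metis
  have R2: "f ` {n. odd n} \<subseteq> T - ?R" using f by (auto dest: injD)
  have R3: "infinite (f ` {n. odd n})" using i2 f(1) finite_imageD inj_on_subset subset_UNIV by metis
  have "?R \<subseteq> T" using f(2) by auto
  moreover have "infinite (T - ?R)" using R2 R3 finite_subset by blast
  ultimately show ?thesis using R1 by blast
qed

lemma countable_lepoll_inf:
  assumes "countable X" "infinite Y"
  shows "X \<lesssim> Y"
proof -
  have "X \<lesssim> (UNIV :: nat set)" using assms(1) by (auto simp: countable_def lepoll_def)
  also have "(UNIV :: nat set) \<lesssim> Y" using assms(2) by (simp add: infinite_le_lepoll)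
  finally show ?thesis .
qed

theorem mainTheorem5:
  fixes V :: "'a set" and E :: "'a \<Rightarrow> 'a \<Rightarrow> bool"
    and W :: "'h set" and F :: "'h \<Rightarrow> 'h \<Rightarrow> bool"
  assumes "simple_graph V E"
    and "countable V" and "infinite V"
    and "is_line_graph_of V E W F"
  shows "\<exists>V1 V2. majority_2_colouring V E V1 V2"
proof -
  have sg: "u \<in> V \<and> v \<in> V \<and> u \<noteq> v \<and> E v u" if "E u v" for u v
    using assms(1) that unfolding simple_graph_def by blast
  have sym: "E w u" if "E u w" for u w using sg[of u w] that by blast
  have irr: "\<not> E u u" for u using sg[of u u] by blast
  have cV: "countable V" by fact
  obtain \<phi> where bij: "bij_betw \<phi> V (edge_set F)"
    and adj: "\<forall>u\<in>V. \<forall>v\<in>V. E u v \<longleftrightarrow> u \<noteq> v \<and> \<phi> u \<inter> \<phi> v \<noteq> {}"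
    using assms(4) unfolding is_line_graph_of_def by blast
  have inj: "inj_on \<phi> V" using bij by (simp add: bij_betw_def)
  have two: "\<exists>a b. \<phi> v = {a, b}" if "v \<in> V" for v
  proof -
    have "\<phi> v \<in> edge_set F" using bij that by (meson bij_betwE)
    then show ?thesis by (auto simp: edge_set_def)
  qed
  have finphi: "finite (\<phi> v)" if "v \<in> V" for v using two[OF that] by auto
  have nV: "nbhd E v \<subseteq> V" for v
  proof
    fix u assume "u \<in> nbhd E v"
    then have "E v u" by (simp add: nbhd_def)
    then show "u \<in> V" using sg[of v u] by blast
  qed
  define star where "star x = {u \<in> V. x \<in> \<phi> u}" for x
  have nsub: "nbhd E v \<subseteq> (\<Union>x\<in>\<phi> v. star x)" if "v \<in> V" for v
  proof
    fix u assume "u \<in> nbhd E v"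
    then have "E v u" "u \<in> V" using nV by (auto simp: nbhd_def)
    then have "\<phi> v \<inter> \<phi> u \<noteq> {}" using adj that by blast
    then show "u \<in> (\<Union>x\<in>\<phi> v. star x)" using \<open>u \<in> V\<close> by (auto simp: star_def)
  qed
  have ssub: "star x - {v} \<subseteq> nbhd E v" if "v \<in> V" "x \<in> \<phi> v" for v x
  proof
    fix u assume u: "u \<in> star x - {v}"
    then have "u \<in> V" "u \<noteq> v" "x \<in> \<phi> u" by (auto simp: star_def)
    then show "u \<in> nbhd E v" using adj that by (auto simp: nbhd_def)
  qed
  define I where "I = {x. infinite (star x)}"
  define B where "B = {v \<in> V. \<exists>x\<in>\<phi> v. x \<in> I}"
  define A where "A = V - B"
  have finA: "\<forall>u\<in>A. finite (nbhd E u)"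
  proof
    fix u assume "u \<in> A"
    then have "u \<in> V" "\<forall>x\<in>\<phi> u. finite (star x)" by (auto simp: A_def B_def I_def)
    then have "finite (\<Union>x\<in>\<phi> u. star x)" using finphi by blast
    then show "finite (nbhd E u)" using nsub[OF \<open>u \<in> V\<close>] finite_subset by blast
  qed
  have cA: "countable A" using cV by (auto simp: A_def intro: countable_subset)
  have cI: "countable I"
  proof -
    have "I \<subseteq> (\<Union>u\<in>V. \<phi> u)"
    proof
      fix x assume "x \<in> I"
      then have "star x \<noteq> {}" by (auto simp: I_def)
      then show "x \<in> (\<Union>u\<in>V. \<phi> u)" by (auto simp: star_def)
    qed
    moreover have "countable (\<Union>u\<in>V. \<phi> u)" using cV finphi by (auto intro: countable_finite)
    ultimately show ?thesis by (rule countable_subset)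
  qed
  have sint: "finite (star x \<inter> star y)" if "x \<noteq> y" for x y
  proof -
    let ?S = "star x \<inter> star y"
    have "\<phi> ` ?S \<subseteq> {{x, y}}"
    proof
      fix e assume "e \<in> \<phi> ` ?S"
      then obtain u where u: "u \<in> V" "x \<in> \<phi> u" "y \<in> \<phi> u" "e = \<phi> u" by (auto simp: star_def)
      obtain a b where "\<phi> u = {a, b}" using two[OF u(1)] by blast
      then show "e \<in> {{x, y}}" using u that by auto
    qed
    then have "finite (\<phi> ` ?S)" using finite_subset by blast
    moreover have "inj_on \<phi> ?S" using inj by (rule inj_on_subset) (auto simp: star_def)
    ultimately show ?thesis using finite_imageD by blast
  qed
  define idx where "idx = to_nat_on I"
  have injidx: "inj_on idx I" using cI unfolding idx_def by (rule inj_on_to_nat_on)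
  define S' where "S' x = star x - (\<Union>y\<in>{y \<in> I. idx y < idx x}. star y)" for x
  have S'inf: "infinite (S' x)" if xI: "x \<in> I" for x
  proof -
    have fy: "finite {y \<in> I. idx y < idx x}"
    proof -
      have "idx ` {y \<in> I. idx y < idx x} \<subseteq> {..<idx x}" by auto
      then have "finite (idx ` {y \<in> I. idx y < idx x})" using finite_subset by blast
      moreover have "inj_on idx {y \<in> I. idx y < idx x}" using injidx by (rule inj_on_subset) auto
      ultimately show ?thesis using finite_imageD by blast
    qed
    have "finite (\<Union>y\<in>{y \<in> I. idx y < idx x}. star x \<inter> star y)"
    proof (rule finite_UN_I[OF fy])
      fix y assume "y \<in> {y \<in> I. idx y < idx x}"
      then have "x \<noteq> y" by auto
      then show "finite (star x \<inter> star y)" by (rule sint)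
    qed
    moreover have "S' x = star x - (\<Union>y\<in>{y \<in> I. idx y < idx x}. star x \<inter> star y)"
      by (auto simp: S'_def)
    moreover have "infinite (star x)" using xI by (simp add: I_def)
    ultimately show ?thesis using Diff_infinite_finite by metis
  qed
  have S'star: "S' x \<subseteq> star x" for x by (auto simp: S'_def)
  have S'disj: "S' x \<inter> S' y = {}" if "x \<in> I" "y \<in> I" "x \<noteq> y" for x y
  proof -
    have "idx x \<noteq> idx y" using injidx that by (meson inj_onD)
    then consider "idx y < idx x" | "idx x < idx y" by linarith
    then show ?thesis
    proof cases
      case 1 then show ?thesis using that(2) S'star[of y] by (auto simp: S'_def)
    next
      case 2 then show ?thesis using that(1) S'star[of x] by (auto simp: S'_def)
    qed
  qed
  define R where "R x = (SOME R. R \<subseteq> S' x \<and> infinite R \<and> infinite (S' x - R))" for x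
  have R: "R x \<subseteq> S' x \<and> infinite (R x) \<and> infinite (S' x - R x)" if "x \<in> I" for x
    unfolding R_def by (rule someI_ex) (rule split_inf[OF S'inf[OF that]])
  define colB where "colB u = (\<exists>x\<in>I. u \<in> R x)" for u
  have colR: "colB u" if "x \<in> I" "u \<in> R x" for x u using that by (auto simp: colB_def)
  have colnR: "\<not> colB u" if "x \<in> I" "u \<in> S' x - R x" for x u
  proof
    assume "colB u"
    then obtain y where y: "y \<in> I" "u \<in> R y" by (auto simp: colB_def)
    show False
    proof (cases "y = x")
      case True then show False using that y by auto
    next
      case False then show False using S'disj[OF that(1) y(1)] R[OF y(1)] that y by blast
    qed
  qed
  have "\<exists>c. (\<forall>u. u \<notin> A \<longrightarrow> c u = colB u) \<and> (\<forall>v\<in>A. good E c v)"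
    apply (rule koenig_step[of E A colB])
       apply (erule sym)
      apply (rule irr)
     apply (rule cA)
    apply (rule finA)
    done
  then obtain c where cB: "\<forall>u. u \<notin> A \<longrightarrow> c u = colB u" and cg: "\<forall>v\<in>A. good E c v"
    by (elim exE conjE)
  have key: "{w \<in> nbhd E v. c w = c v} \<lesssim> {w \<in> nbhd E v. c w \<noteq> c v}" if vV: "v \<in> V" for v
  proof (cases "v \<in> A")
    case True
    have "finite (nbhd E v)" using finA True by blast
    then show ?thesis using cg True by (simp add: good_def lepoll_iff_card_le)
  next
    case False
    then obtain x where x: "x \<in> \<phi> v" "x \<in> I" using vV by (auto simp: A_def B_def)
    have SB: "S' x \<subseteq> B" using S'star[of x] x(2) by (auto simp: star_def B_def)
    define T where "T = (if c v then S' x - R x else R x)"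
    have Tinf: "infinite T" using R[OF x(2)] by (simp add: T_def)
    have "T \<subseteq> {w \<in> nbhd E v. c w \<noteq> c v}"
    proof
      fix w assume w: "w \<in> T"
      have wS: "w \<in> S' x" using w R[OF x(2)] by (auto simp: T_def split: if_splits)
      then have cw: "c w = colB w" using SB cB by (auto simp: A_def)
      have "c w \<noteq> c v" using w colR[OF x(2)] colnR[OF x(2)] cw by (auto simp: T_def split: if_splits)
      moreover have "w \<noteq> v" using calculation by auto
      then have "w \<in> nbhd E v" using ssub[OF vV x(1)] wS S'star[of x] by auto
      ultimately show "w \<in> {w \<in> nbhd E v. c w \<noteq> c v}" by simp
    qed
    then have "infinite {w \<in> nbhd E v. c w \<noteq> c v}" using Tinf finite_subset by blast
    moreover have "countable {w \<in> nbhd E v. c w = c v}" using nV cV by (blast intro: countable_subset)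
    ultimately show ?thesis by (simp add: countable_lepoll_inf)
  qed
  define V1 where "V1 = {v \<in> V. c v}"
  define V2 where "V2 = {v \<in> V. \<not> c v}"
  have "majority_2_colouring V E V1 V2"
    unfolding majority_2_colouring_def
  proof (intro conjI ballI)
    show "V1 \<union> V2 = V" "V1 \<inter> V2 = {}" by (auto simp: V1_def V2_def)
  next
    fix Vi v assume Vi: "Vi \<in> {V1, V2}" and v: "v \<in> Vi"
    then have vV: "v \<in> V" by (auto simp: V1_def V2_def)
    have e1: "nbhd E v \<inter> Vi = {w \<in> nbhd E v. c w = c v}"
      using Vi v nV[of v] by (auto simp: V1_def V2_def)
    have e2: "nbhd E v - Vi = {w \<in> nbhd E v. c w \<noteq> c v}"
      using Vi v nV[of v] by (auto simp: V1_def V2_def)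
    show "nbhd E v \<inter> Vi \<lesssim> nbhd E v - Vi" unfolding e1 e2 by (rule key[OF vV])
  qed
  then show ?thesis by blast
qed

end
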